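(* Consider the closed-loop system $\Sigma$: $\dot x(t)=f\big(x(t),k(x(t_{k(t)}))\big)$ described in the context, with control update sequence $\{t_k\}$ generated by the rule based on the condition $\gamma_2(4\|e(t)\|)\le\lambda(1-c)V(x(t))$, $c\in(0,1)$, where during DoS intervals update attempts are repeated at the sampling times (so that updates may be delayed beyond the end of a DoS interval). Assume: (A1) $\lim_{n\to\infty}h_n=\infty$ and there exist $\kappa\ge0$, $\tau>0$ with $|\Xi(t)|\le\kappa+t/\tau$ for all $t\ge0$; (A2) there exists $\mu>0$ with $\gamma_2(4r)\le\mu\,\alpha_1(r)$ for all $r\ge0$. Let $\Delta_*:=\sup_{n\in\mathbb N}\Delta_{\mathbb S_n}$ and $\tau_*:=\inf_{n\in\mathbb N}\tau_n>0$. If $$\tau>\frac{c\lambda}{\lambda+2\mu}\Big(1+\frac{\Delta_*}{\tau_*}\Big),$$ then for all $t\ge0$ $$\|x(t)\|\le\alpha_1^{-1}\big(\gamma\,e^{-\beta t}\,\alpha_2(\|x(0)\|)\big),$$ where $\gamma=e^{\kappa(\lambda+2\mu)(1+\Delta_*/\tau_* )}$ and $\beta=c\lambda-\frac{\lambda+2\mu}{\tau}\big(1+\frac{\Delta_*}{\tau_*}\big)$.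
   Context: Plant: $\dot x=f(x,u)$, $x\in\mathbb R^{n_x}$. There is a smooth feedback $u=k(x)$, a smooth function $V$, class $\mathcal K_\infty$ functions $\alpha_1,\alpha_2,\gamma_2$ and $\lambda>0$ such that for all $x,e$: $\alpha_1(\|x\|)\le V(x)\le\alpha_2(\|x\|)$ and $\nabla V(x)f(x,k(x+e))\le-\lambda V(x)+\gamma_2(\|e\|)$. Norms are Euclidean. DoS: a sequence $\{h_n\}_{n\in\mathbb N}$, $h_0\ge0$, and durations $\tau_n>0$ define DoS intervals $H_n=[h_n,h_n+\tau_n[$ during which no information is transmitted from sensor to actuator. $\Theta(t):=[0,t]\setminus\bigcup_n H_n$ and $\Xi(t):=\bigcup_n H_n\cap[0,t]$, with $|\Xi(t)|$ its total length. Given control update times $\{t_k\}_{k\in\mathbb N}$ with $t_0=0$, let $k(t):=-1$ if $\Theta(t)=\emptyset$ and otherwise $k(t):=\sup\{k\in\mathbb N: t_k\in\Theta(t)\}$ (last successful update); with the convention $x(t_{-1}):=0$. The applied input is $u(t)=k(x(t_{k(t)}))$, and $e(t):=x(t_{k(t)})-x(t)$. Outside DoS, the next update time after $t_k$ is the infimal time larger than $t_k$ at which $\gamma_2(4\|e(t)\|)\le\lambda(1-c)V(x(t))$ is violated. Notation: $\Delta_k:=t_{k+1}-t_k$; $\mathbb S_n:=\{k\in\mathbb N: t_k\in H_n\}$ (update attempts during $H_n$); $\Delta_{\mathbb S_n}:=\sup_{k\in\mathbb S_n}\Delta_k$; $\bar H_n:=[h_n,h_n+\tau_n+\Delta_{\mathbb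 S_n}[$ bounds the $n$-th interval over which the control is not updated. *)

theory Defs
  imports "HOL-Analysis.Analysis"
begin

definition class_K_inf :: "(real \<Rightarrow> real) \<Rightarrow> bool" where
  "class_K_inf a \<longleftrightarrow> continuous_on {0..} a \<and> a 0 = 0 \<and> strict_mono_on {0..} a
      \<and> filterlim a at_top at_top"

text \<open>DoS intervals H_n = [h_n, h_n + tau_n[ and their union.\<close>
definition dos_int :: "(nat \<Rightarrow> real) \<Rightarrow> (nat \<Rightarrow> real) \<Rightarrow> nat \<Rightarrow> real set" where
  "dos_int h dur n = {h n ..< h n + dur n}"

definition dos_set :: "(nat \<Rightarrow> real) \<Rightarrow> (nat \<Rightarrow> real) \<Rightarrow> real set" where
  "dos_set h dur = (\<Union>n. dos_int h dur n)"

definition Theta :: "(nat \<Rightarrow> real) \<Rightarrow> (nat \<Rightarrow> real) \<Rightarrow> real \<Rightarrow> real set" where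
  "Theta h dur t = {0..t} - dos_set h dur"

definition Xi :: "(nat \<Rightarrow> real) \<Rightarrow> (nat \<Rightarrow> real) \<Rightarrow> real \<Rightarrow> real set" where
  "Xi h dur t = dos_set h dur \<inter> {0..t}"

text \<open>Indices of successful updates up to time t; the last one is k(t).
  The held sample is x(t_{k(t)}), with the convention x(t_{-1}) = 0.\<close>
definition succ_upd :: "(nat \<Rightarrow> real) \<Rightarrow> (nat \<Rightarrow> real) \<Rightarrow> (nat \<Rightarrow> real) \<Rightarrow> real \<Rightarrow> nat set" where
  "succ_upd h dur tk t = {k. tk k \<in> Theta h dur t}"

definition held_sample ::
  "(real \<Rightarrow> 'a::zero) \<Rightarrow> (nat \<Rightarrow> real) \<Rightarrow> (nat \<Rightarrow> real) \<Rightarrow> (nat \<Rightarrow> real) \<Rightarrow> real \<Rightarrow> 'a" where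
  "held_sample x h dur tk t =
     (if succ_upd h dur tk t = {} then 0 else x (tk (Max (succ_upd h dur tk t))))"

text \<open>Delta_{S_n}: supremum of Delta_k over update attempts t_k in H_n (0 if there is none).\<close>
definition Delta_S :: "(nat \<Rightarrow> real) \<Rightarrow> (nat \<Rightarrow> real) \<Rightarrow> (nat \<Rightarrow> real) \<Rightarrow> nat \<Rightarrow> real" where
  "Delta_S h dur tk n =
     (if {k. tk k \<in> dos_int h dur n} = {} then 0
      else Sup ((\<lambda>k. tk (Suc k) - tk k) ` {k. tk k \<in> dos_int h dur n}))"

end

theory Submission
  imports Defs
begin


lemma lemA:
  fixes g :: "real \<Rightarrow> real"
  assumes ab: "a \<le> b" and cont: "continuous_on {a..b} g" and ga: "g a < 0"
    and loc: "\<And>s. s \<in> {a..<b} \<Longrightarrow> g s = 0 \<Longrightarrow> \<exists>d>0. \<forall>u. s < u \<and> u < s + d \<longrightarrow> g u < 0"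
  shows "\<forall>t\<in>{a..b}. g t \<le> 0"
proof (rule ccontr)
  assume "\<not> ?thesis"
  then obtain t where t: "t \<in> {a..b}" "g t > 0" by auto
  define T where "T = {t\<in>{a..b}. g t > 0}"
  have tT: "t \<in> T" using t by (simp add: T_def)
  have bdd: "bdd_below T" unfolding T_def by (rule bdd_belowI[of _ a]) auto
  define s where "s = Inf T"
  have sle: "s \<le> t" unfolding s_def using tT bdd by (rule cInf_lower)
  have as: "a \<le> s" unfolding s_def using tT by (intro cInf_greatest) (auto simp: T_def)
  have sab: "s \<in> {a..b}" using as sle t by auto
  have lowT: "\<And>u. u \<in> T \<Longrightarrow> s \<le> u" unfolding s_def using bdd by (simp add: cInf_lower)
  have near: "\<And>e. e > 0 \<Longrightarrow> \<exists>u\<in>T. u < s + e"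
    using tT unfolding s_def by (subst cInf_less_iff[symmetric]) (auto simp: bdd)
  have c1: "g s \<le> 0"
  proof (rule ccontr)
    assume "\<not> g s \<le> 0"
    hence gs: "g s > 0" by simp
    have "s \<noteq> a" using gs ga by auto
    hence sa: "s > a" using as by simp
    obtain d where d: "d > 0" "\<forall>u\<in>{a..b}. dist u s < d \<longrightarrow> dist (g u) (g s) < g s"
      using cont sab gs unfolding continuous_on_iff by blast
    define u where "u = max a (s - d/2)"
    have u: "u \<in> {a..b}" "dist u s < d" "u < s" using sa d(1) sab by (auto simp: u_def dist_real_def)
    hence "dist (g u) (g s) < g s" using d(2) by blast
    hence "\<bar>g u - g s\<bar> < g s" by (simp add: dist_real_def)
    hence "g u > 0" by linarith
    hence "u \<in> T" using u by (simp add: T_def)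
    thus False using lowT u by fastforce
  qed
  have c2: "g s \<ge> 0"
  proof (rule ccontr)
    assume "\<not> g s \<ge> 0"
    hence gs: "g s < 0" by simp
    obtain d where d: "d > 0" "\<forall>u\<in>{a..b}. dist u s < d \<longrightarrow> dist (g u) (g s) < - g s"
      using cont sab gs unfolding continuous_on_iff by (metis neg_0_less_iff_less)
    obtain u where u: "u \<in> T" "u < s + d" using near d(1) by blast
    have "s \<le> u" using lowT u by simp
    hence "dist u s < d" using u by (simp add: dist_real_def)
    hence "g u < 0" using d(2) u(1) by (auto simp: T_def dist_real_def)
    thus False using u by (simp add: T_def)
  qed
  have gs0: "g s = 0" using c1 c2 by simp
  have "s \<noteq> t" using gs0 t by auto
  hence "s < b" using sle t by auto
  then obtain d where d: "d > 0" "\<forall>u. s < u \<and> u < s + d \<longrightarrow> g u < 0"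
    using loc[of s] gs0 sab by auto
  obtain u where u: "u \<in> T" "u < s + d" using near d(1) by blast
  have "s \<le> u" using lowT u by simp
  moreover have "u \<noteq> s" using u gs0 by (auto simp: T_def)
  ultimately have "g u < 0" using d u by auto
  thus False using u by (simp add: T_def)
qed

lemma mono_lemma:
  fixes \<psi> :: "real \<Rightarrow> real"
  assumes ab: "a \<le> b" and cont: "continuous_on {a..b} \<psi>"
    and der: "\<And>s. s \<in> {a..<b} \<Longrightarrow> (\<psi> has_real_derivative d s) (at s within {s..})"
    and neg: "\<And>s. s \<in> {a..<b} \<Longrightarrow> \<psi> s \<ge> C \<Longrightarrow> d s \<le> 0"
    and init: "\<psi> a \<le> C"
  shows "\<forall>t\<in>{a..b}. \<psi> t \<le> C"
proof -
  have eps: "\<psi> t \<le> C + e * (t - a + 1)" if e: "e > 0" and t: "t \<in> {a..b}" for e t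
  proof -
    define g where "g u = \<psi> u - C - e * (u - a) - e" for u
    have gc: "continuous_on {a..b} g" unfolding g_def
      by (intro continuous_intros cont)
    have ga: "g a < 0" using init e by (simp add: g_def)
    have loc: "\<exists>d>0. \<forall>u. s < u \<and> u < s + d \<longrightarrow> g u < 0" if s: "s \<in> {a..<b}" "g s = 0" for s
    proof -
      have "e * (s - a) \<ge> 0" using s e by simp
      hence "\<psi> s \<ge> C" using s e unfolding g_def by linarith
      hence ds: "d s \<le> 0" using neg s by simp
      have gd: "(g has_real_derivative (d s - e)) (at s within {s..})"
        unfolding g_def by (auto intro!: derivative_eq_intros der s)
      obtain dd where dd: "dd > 0" "\<forall>h>0. s + h \<in> {s..} \<longrightarrow> h < dd \<longrightarrow> g s > g (s + h)"
        using has_real_derivative_neg_dec_right[OF gd] ds e by auto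
      have "g u < 0" if "s < u" "u < s + dd" for u
        using dd(2)[rule_format, of "u - s"] that s(2) by auto
      thus ?thesis using dd(1) by blast
    qed
    have "\<forall>t\<in>{a..b}. g t \<le> 0" by (rule lemA[OF ab gc ga loc])
    thus ?thesis using t by (auto simp: g_def algebra_simps)
  qed
  show ?thesis
  proof
    fix t assume t: "t \<in> {a..b}"
    show "\<psi> t \<le> C"
    proof (rule ccontr)
      assume "\<not> \<psi> t \<le> C"
      hence p: "\<psi> t - C > 0" by simp
      have pos: "t - a + 1 > 0" using t by auto
      define e where "e = (\<psi> t - C) / (2 * (t - a + 1))"
      have e: "e > 0" using p pos by (simp add: e_def)
      have "e * (t - a + 1) = (\<psi> t - C) / 2" using pos by (simp add: e_def field_simps)
      moreover have "\<psi> t \<le> C + e * (t - a + 1)" using eps[OF e t] .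
      ultimately show False using p by auto
    qed
  qed
qed


lemma ico_sets: "{a..<b::real} \<in> sets lebesgue" by simp
lemma icc_fm: "{a..b::real} \<in> lmeasurable" by (metis lmeasurable_cbox cbox_interval)
lemma ico_meas: "a \<le> b \<Longrightarrow> measure lebesgue {a..<b::real} = b - a"
  by (subst measure_completion) auto

lemma meas_bound:
  fixes h dur \<Delta> :: "nat \<Rightarrow> real" and D t :: real
  assumes h0: "h 0 \<ge> 0" and dur_pos: "\<And>n. dur n > 0"
    and h_order: "\<And>n. h n + dur n \<le> h (Suc n)"
    and hlim: "filterlim h at_top sequentially"
    and D: "D \<ge> 0" and \<Delta>0: "\<And>n. \<Delta> n \<ge> 0" and \<Delta>D: "\<And>n. \<Delta> n \<le> D * dur n"
    and t: "t \<ge> 0"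
  shows "measure lebesgue ((\<Union>n. {h n ..< h n + dur n + \<Delta> n}) \<inter> {0..t})
           \<le> (1 + D) * measure lebesgue (Xi h dur t)"
proof -
  have hsuc: "h n < h (Suc n)" for n using h_order[of n] dur_pos[of n] by linarith
  have hmono: "strict_mono h" using hsuc by (simp add: strict_mono_Suc_iff)
  have hpos: "h n \<ge> 0" for n
  proof -
    have "h 0 \<le> h n" using hmono by (simp add: strict_mono_less_eq)
    thus ?thesis using h0 by linarith
  qed
  have hdis: "h n + dur n \<le> h m" if "n < m" for n m
  proof -
    have "Suc n \<le> m" using that by simp
    hence "h (Suc n) \<le> h m" using hmono by (simp add: strict_mono_less_eq)
    thus ?thesis using h_order[of n] by linarith
  qed
  have "\<exists>N. \<forall>n\<ge>N. t < h n"
    using hlim unfolding filterlim_at_top_dense eventually_sequentially by blast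
  then obtain N where N: "\<And>n. n \<ge> N \<Longrightarrow> h n > t" by blast
  define bH where "bH n = {h n ..< h n + dur n + \<Delta> n} \<inter> {0..t}" for n
  define H where "H n = {h n ..< h n + dur n} \<inter> {0..t}" for n
  have bHs: "bH n \<in> sets lebesgue" for n unfolding bH_def by simp
  have Hfm: "H n \<in> lmeasurable" for n unfolding H_def
    by (rule fmeasurable_Int_fmeasurable[OF bounded_set_imp_lmeasurable]) auto
  have bHfm: "bH n \<in> lmeasurable" for n unfolding bH_def
    by (rule fmeasurable_Int_fmeasurable[OF bounded_set_imp_lmeasurable]) auto
  have sub: "(\<Union>n. {h n ..< h n + dur n + \<Delta> n}) \<inter> {0..t} \<subseteq> (\<Union>n\<in>{..<N}. bH n)"
  proof
    fix u assume "u \<in> (\<Union>n. {h n ..< h n + dur n + \<Delta> n}) \<inter> {0..t}"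
    then obtain n where n: "h n \<le> u" "u < h n + dur n + \<Delta> n" "0 \<le> u" "u \<le> t" by auto
    have "n < N" using N[of n] n by force
    thus "u \<in> (\<Union>n\<in>{..<N}. bH n)" using n by (auto simp: bH_def)
  qed
  have Xieq: "Xi h dur t = (\<Union>n\<in>{..<N}. H n)"
  proof
    show "Xi h dur t \<subseteq> (\<Union>n\<in>{..<N}. H n)"
    proof
      fix u assume "u \<in> Xi h dur t"
      then obtain n where n: "h n \<le> u" "u < h n + dur n" "0 \<le> u" "u \<le> t"
        by (auto simp: Xi_def dos_set_def dos_int_def)
      have "n < N" using N[of n] n by force
      thus "u \<in> (\<Union>n\<in>{..<N}. H n)" using n by (auto simp: H_def)
    qed
    show "(\<Union>n\<in>{..<N}. H n) \<subseteq> Xi h dur t"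
      by (auto simp: H_def Xi_def dos_set_def dos_int_def)
  qed
  have each: "measure lebesgue (bH n) \<le> (1 + D) * measure lebesgue (H n)" for n
  proof (cases "h n + dur n \<le> t")
    case True
    have "H n = {h n ..< h n + dur n}" using True hpos[of n] by (auto simp: H_def)
    hence mH: "measure lebesgue (H n) = dur n" using dur_pos[of n] by (simp add: ico_meas)
    have "measure lebesgue (bH n) \<le> measure lebesgue {h n ..< h n + dur n + \<Delta> n}"
      by (rule measure_mono_fmeasurable) (auto simp: bH_def bounded_set_imp_lmeasurable)
    also have "\<dots> = dur n + \<Delta> n" using dur_pos[of n] \<Delta>0[of n] by (simp add: ico_meas)
    also have "\<dots> \<le> (1 + D) * dur n" using \<Delta>D[of n] by (simp add: algebra_simps)
    finally show ?thesis using mH by simp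
  next
    case False
    have "bH n = H n" using False \<Delta>0[of n] by (auto simp: bH_def H_def)
    moreover have "measure lebesgue (H n) \<ge> 0" by simp
    ultimately show ?thesis using D by (simp add: mult_le_cancel_right1)
  qed
  have "measure lebesgue ((\<Union>n. {h n ..< h n + dur n + \<Delta> n}) \<inter> {0..t})
        \<le> measure lebesgue (\<Union>n\<in>{..<N}. bH n)"
    by (rule measure_mono_fmeasurable[OF sub]) (auto intro!: fmeasurable.finite_UN bHfm)
  also have "\<dots> \<le> (\<Sum>n<N. measure lebesgue (bH n))"
    by (rule measure_UNION_le) (auto simp: bHs)
  also have "\<dots> \<le> (\<Sum>n<N. (1 + D) * measure lebesgue (H n))"
    by (rule sum_mono) (rule each)
  also have "\<dots> = (1 + D) * (\<Sum>n<N. measure lebesgue (H n))" by (simp add: sum_distrib_left)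
  also have "(\<Sum>n<N. measure lebesgue (H n)) = measure lebesgue (\<Union>n\<in>{..<N}. H n)"
  proof (rule measure_UNION'[symmetric])
    show "pairwise (\<lambda>i j. disjnt (H i) (H j)) {..<N}"
      unfolding pairwise_def disjnt_def
    proof (intro ballI impI)
      fix i j assume "i \<in> {..<N}" "j \<in> {..<N}" "i \<noteq> j"
      hence "i < j \<or> j < i" by auto
      thus "H i \<inter> H j = {}" using hdis[of i j] hdis[of j i] by (auto simp: H_def)
    qed
  qed (auto simp: Hfm)
  finally show ?thesis by (simp add: Xieq)
qed


lemma K_mono: "class_K_inf a \<Longrightarrow> 0 \<le> u \<Longrightarrow> u \<le> v \<Longrightarrow> a u \<le> a v"
  unfolding class_K_inf_def
  by (metis atLeast_iff order.trans order_le_less strict_mono_onD)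

lemma K_nonneg: "class_K_inf a \<Longrightarrow> 0 \<le> u \<Longrightarrow> 0 \<le> a u"
  using K_mono[of a 0 u] unfolding class_K_inf_def by simp

lemma K_sum: "class_K_inf a \<Longrightarrow> 0 \<le> u \<Longrightarrow> 0 \<le> v \<Longrightarrow> a (u + v) \<le> a (2 * u) + a (2 * v)"
proof -
  assume K: "class_K_inf a" and u: "0 \<le> u" and v: "0 \<le> v"
  show ?thesis
  proof (cases "u \<le> v")
    case True
    hence "a (u + v) \<le> a (2 * v)" using u v by (intro K_mono[OF K]) auto
    thus ?thesis using K_nonneg[OF K, of "2 * u"] u by linarith
  next
    case False
    hence "a (u + v) \<le> a (2 * u)" using u v by (intro K_mono[OF K]) auto
    thus ?thesis using K_nonneg[OF K, of "2 * v"] v by linarith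
  qed
qed

lemma K_inv:
  assumes K: "class_K_inf a" and y: "y \<ge> 0" and r: "r \<ge> 0" and ar: "a r \<le> y"
  shows "r \<le> the_inv_into {0..} a y"
proof -
  have c: "continuous_on {0..} a" "a 0 = 0" "strict_mono_on {0..} a" "filterlim a at_top at_top"
    using K by (auto simp: class_K_inf_def)
  have "eventually (\<lambda>z. a z \<ge> y) at_top" using c(4) by (simp add: filterlim_at_top)
  then obtain b0 where b0: "\<And>z. z \<ge> b0 \<Longrightarrow> a z \<ge> y" by (auto simp: eventually_at_top_linorder)
  define b where "b = max b0 0"
  have b: "b \<ge> 0" "a b \<ge> y" using b0 by (auto simp: b_def)
  have cb: "continuous_on {0..b} a" using c(1) by (rule continuous_on_subset) auto
  obtain q where q: "0 \<le> q" "q \<le> b" "a q = y" using IVT'[of a 0 y b] c(2) y b cb by auto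
  have inj: "inj_on a {0..}" using c(3) by (rule strict_mono_on_imp_inj_on)
  have tq: "the_inv_into {0..} a y = q" by (rule the_inv_into_f_eq[OF inj q(3)]) (use q in auto)
  have "r \<le> q"
  proof (rule ccontr)
    assume "\<not> r \<le> q"
    hence "a q < a r" using c(3) q r by (intro strict_mono_onD[OF c(3)]) auto
    thus False using ar q by simp
  qed
  thus ?thesis using tq by simp
qed

lemma m_mono:
  fixes Bs :: "real set"
  assumes "Bs \<in> sets lebesgue" "s \<le> t"
  shows "measure lebesgue (Bs \<inter> {0..s}) \<le> measure lebesgue (Bs \<inter> {0..t})"
proof (rule measure_mono_fmeasurable)
  show "Bs \<inter> {0..s} \<subseteq> Bs \<inter> {0..t}" using assms by auto
  show "Bs \<inter> {0..s} \<in> sets lebesgue" using assms by auto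
  have "{0..t} \<in> lmeasurable" by (metis lmeasurable_cbox cbox_interval)
  thus "Bs \<inter> {0..t} \<in> lmeasurable" using assms
    by (metis Int_commute fmeasurable_Int_fmeasurable)
qed

lemma m_add:
  fixes Bs :: "real set"
  assumes B: "Bs \<in> sets lebesgue" and st: "0 \<le> s" "s \<le> t" and sub: "{s..<t} \<subseteq> Bs"
  shows "measure lebesgue (Bs \<inter> {0..s}) + (t - s) \<le> measure lebesgue (Bs \<inter> {0..t})"
proof -
  have f: "{0..t} \<in> lmeasurable" "{0..s} \<in> lmeasurable" by (metis lmeasurable_cbox cbox_interval)+
  have A: "Bs \<inter> {0..s} \<in> lmeasurable" using f B by (metis Int_commute fmeasurable_Int_fmeasurable)
  have O: "{s<..<t} \<in> lmeasurable" by (rule bounded_set_imp_lmeasurable) auto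
  have mO: "measure lebesgue {s<..<t} = t - s" using st by (subst measure_completion) auto
  have "measure lebesgue ((Bs \<inter> {0..s}) \<union> {s<..<t}) = measure lebesgue (Bs \<inter> {0..s}) + measure lebesgue {s<..<t}"
    using A O by (intro measure_Union) (auto simp: fmeasurable_def)
  also have "\<dots> = measure lebesgue (Bs \<inter> {0..s}) + (t - s)" using mO by simp
  finally have eq: "measure lebesgue ((Bs \<inter> {0..s}) \<union> {s<..<t}) = measure lebesgue (Bs \<inter> {0..s}) + (t - s)" .
  have "measure lebesgue ((Bs \<inter> {0..s}) \<union> {s<..<t}) \<le> measure lebesgue (Bs \<inter> {0..t})"
  proof (rule measure_mono_fmeasurable)
    show "Bs \<inter> {0..s} \<union> {s<..<t} \<subseteq> Bs \<inter> {0..t}" using sub st by auto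
    show "Bs \<inter> {0..s} \<union> {s<..<t} \<in> sets lebesgue" using A O by auto
    show "Bs \<inter> {0..t} \<in> lmeasurable" using f B by (metis Int_commute fmeasurable_Int_fmeasurable)
  qed
  thus ?thesis using eq by simp
qed



lemma W_deriv:
  fixes V :: "'a::real_normed_vector \<Rightarrow> real" and x :: "real \<Rightarrow> 'a"
  assumes Vd: "(V has_derivative DV (x s)) (at (x s))"
    and xd: "(x has_vector_derivative v) (at s within S)"
  shows "((\<lambda>u. V (x u)) has_real_derivative DV (x s) v) (at s within S)"
proof -
  have xd': "(x has_derivative (\<lambda>h. h *\<^sub>R v)) (at s within S)"
    using xd by (simp add: has_vector_derivative_def)
  have c: "((V \<circ> x) has_derivative (DV (x s) \<circ> (\<lambda>h. h *\<^sub>R v))) (at s within S)"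
    by (rule diff_chain_within[OF xd' has_derivative_at_withinI[OF Vd]])
  have lin: "linear (DV (x s))" using has_derivative_bounded_linear[OF Vd] bounded_linear.linear by blast
  have "(DV (x s) \<circ> (\<lambda>h. h *\<^sub>R v)) = (\<lambda>h. DV (x s) v * h)"
    by (rule ext) (simp add: linear_cmul[OF lin])
  with c show ?thesis by (simp add: has_field_derivative_def comp_def)
qed

lemma Delta_bound:
  assumes tm: "strict_mono tk" and tu: "filterlim tk at_top sequentially"
    and l: "tk l \<in> dos_int h dur n"
  shows "tk (Suc l) - tk l \<le> Delta_S h dur tk n"
proof -
  define K where "K = {k. tk k \<in> dos_int h dur n}"
  obtain N where N: "\<And>k. k \<ge> N \<Longrightarrow> tk k \<ge> h n + dur n"
    using tu unfolding filterlim_at_top eventually_sequentially by blast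
  have "K \<subseteq> {..<N}"
  proof
    fix k assume "k \<in> K"
    hence "tk k < h n + dur n" by (simp add: K_def dos_int_def)
    thus "k \<in> {..<N}" using N[of k] by force
  qed
  hence fin: "finite K" by (rule finite_subset) simp
  have lK: "l \<in> K" using l by (simp add: K_def)
  have "Delta_S h dur tk n = Sup ((\<lambda>k. tk (Suc k) - tk k) ` K)"
    using lK by (auto simp: Delta_S_def K_def)
  moreover have "tk (Suc l) - tk l \<le> Sup ((\<lambda>k. tk (Suc k) - tk k) ` K)"
    by (rule cSup_upper) (use lK fin in auto)
  ultimately show ?thesis by simp
qed

lemma Delta_nonneg:
  assumes tm: "strict_mono tk" and tu: "filterlim tk at_top sequentially"
  shows "Delta_S h dur tk n \<ge> 0"
proof (cases "{k. tk k \<in> dos_int h dur n} = {}")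
  case True thus ?thesis by (simp add: Delta_S_def)
next
  case False
  then obtain l where l: "tk l \<in> dos_int h dur n" by auto
  have "tk l < tk (Suc l)" using tm by (simp add: strict_mono_less)
  thus ?thesis using Delta_bound[OF tm tu l] by linarith
qed


theorem theorem2:
  fixes f :: "real ^ 'n \<Rightarrow> real ^ 'm \<Rightarrow> real ^ 'n"
    and kfb :: "real ^ 'n \<Rightarrow> real ^ 'm"
    and V :: "real ^ 'n \<Rightarrow> real"
    and DV :: "real ^ 'n \<Rightarrow> real ^ 'n \<Rightarrow> real"
    and \<alpha>1 \<alpha>2 \<gamma>2 :: "real \<Rightarrow> real"
    and lam c \<kappa> \<tau> \<mu> :: real
    and h dur :: "nat \<Rightarrow> real"
    and tk :: "nat \<Rightarrow> real"
    and x :: "real \<Rightarrow> real ^ 'n"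
  assumes K1: "class_K_inf \<alpha>1" and K2: "class_K_inf \<alpha>2" and K3: "class_K_inf \<gamma>2"
    and lam: "lam > 0"
    and Vder: "\<And>z. (V has_derivative DV z) (at z)"
    and Vbounds: "\<And>z. \<alpha>1 (norm z) \<le> V z \<and> V z \<le> \<alpha>2 (norm z)"
    and ISS: "\<And>z e. DV z (f z (kfb (z + e))) \<le> - lam * V z + \<gamma>2 (norm e)"
    and c: "0 < c" "c < 1"
    \<comment> \<open>DoS pattern: off/on transitions h_n, durations dur_n\<close>
    and h0: "h 0 \<ge> 0"
    and dur_pos: "\<And>n. dur n > 0"
    and h_order: "\<And>n. h n + dur n \<le> h (Suc n)"
    \<comment> \<open>(A1)\<close>
    and A1a: "filterlim h at_top sequentially"
    and A1b: "\<kappa> \<ge> 0" "\<tau> > 0"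
    and A1c: "\<And>t. t \<ge> 0 \<Longrightarrow> measure lebesgue (Xi h dur t) \<le> \<kappa> + t / \<tau>"
    \<comment> \<open>(A2)\<close>
    and A2: "\<mu> > 0" "\<And>r. r \<ge> 0 \<Longrightarrow> \<gamma>2 (4 * r) \<le> \<mu> * \<alpha>1 r"
    \<comment> \<open>control update / attempt times\<close>
    and t0: "tk 0 = 0"
    and t_mono: "strict_mono tk"
    and t_unb: "filterlim tk at_top sequentially"
    and trig: "\<And>k. tk k \<notin> dos_set h dur \<Longrightarrow>
        {s. s > tk k \<and> \<not> (\<gamma>2 (4 * norm (x (tk k) - x s)) \<le> lam * (1 - c) * V (x s))} \<noteq> {} \<Longrightarrow>
        tk (Suc k) = Inf {s. s > tk k \<and> \<not> (\<gamma>2 (4 * norm (x (tk k) - x s)) \<le> lam * (1 - c) * V (x s))}"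
    \<comment> \<open>Delta_* and tau_*\<close>
    and Dbdd: "bdd_above (range (Delta_S h dur tk))"
    and tau_star_pos: "Inf (range dur) > 0"
    \<comment> \<open>closed-loop solution\<close>
    and x_cont: "continuous_on {0..} x"
    and x_ode: "\<And>t. t \<ge> 0 \<Longrightarrow>
        (x has_vector_derivative f (x t) (kfb (held_sample x h dur tk t))) (at t within {t..})"
    and gain: "\<tau> > c * lam / (lam + 2 * \<mu>) *
                   (1 + Sup (range (Delta_S h dur tk)) / Inf (range dur))"
  shows "\<forall>t \<ge> 0. norm (x t) \<le> the_inv_into {0..} \<alpha>1
          (exp (\<kappa> * (lam + 2 * \<mu>) * (1 + Sup (range (Delta_S h dur tk)) / Inf (range dur)))
           * exp (- (c * lam - (lam + 2 * \<mu>) / \<tau> * (1 + Sup (range (Delta_S h dur tk)) / Inf (range dur))) * t)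
           * \<alpha>2 (norm (x 0)))"
proof -
  define DS where "DS = dos_set h dur"
  define W where "W s = V (x s)" for s
  define hs where "hs s = held_sample x h dur tk s" for s
  define Dst where "Dst = Sup (range (Delta_S h dur tk))"
  define tst where "tst = Inf (range dur)"
  define D where "D = Dst / tst"
  define R where "R = lam + 2 * \<mu>"
  define r where "r = R - c * lam"
  define Bs where "Bs = (\<Union>n. {h n ..< h n + dur n + Delta_S h dur tk n})"
  define m where "m t = measure lebesgue (Bs \<inter> {0..t})" for t
  define G where "G t = exp (- (c * lam) * t + R * m t) * W 0" for t
  have Rpos: "R > 0" using lam A2(1) by (simp add: R_def)
  have rpos: "r > 0"
  proof -
    have "lam * (1 - c) > 0" using lam c by simp
    thus ?thesis using A2(1) by (simp add: r_def R_def algebra_simps)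
  qed
  have tk_le: "tk a \<le> tk b \<longleftrightarrow> a \<le> b" for a b using t_mono by (simp add: strict_mono_less_eq)
  have tk_less: "tk a < tk b \<longleftrightarrow> a < b" for a b using t_mono by (simp add: strict_mono_less)
  have tk_nn: "tk k \<ge> 0" for k using tk_le[of 0 k] t0 by simp
  have Wnn: "W s \<ge> 0" for s
    using Vbounds[of "x s"] K_nonneg[OF K1, of "norm (x s)"] by (simp add: W_def)
  have Vcont: "continuous_on UNIV V"
    by (intro continuous_at_imp_continuous_on ballI has_derivative_continuous[OF Vder])
  have Wcont: "continuous_on {0..} W"
    unfolding W_def using continuous_on_compose2[OF Vcont x_cont] by simp
  have Wcont': "continuous_on {a..b} W" if "0 \<le> a" for a b
    by (rule continuous_on_subset[OF Wcont]) (use that in auto)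
  have Wder: "(W has_real_derivative DV (x s) (f (x s) (kfb (hs s)))) (at s within {s..})"
    if "s \<ge> 0" for s
    unfolding W_def hs_def by (rule W_deriv[where V=V and DV=DV and x=x and s=s, OF Vder x_ode[OF that]])
  have locate: "\<exists>l. tk l \<le> s \<and> s < tk (Suc l)" if s: "s \<ge> 0" for s
  proof -
    have "\<exists>N. \<forall>n\<ge>N. s < tk n"
      using t_unb unfolding filterlim_at_top_dense eventually_sequentially by blast
    then obtain n where n: "tk n > s" by blast
    define n0 where "n0 = (LEAST n. tk n > s)"
    have n0: "tk n0 > s" unfolding n0_def by (rule LeastI[of _ n]) (rule n)
    have "n0 \<noteq> 0"
    proof
      assume "n0 = 0" with n0 t0 s show False by simp
    qed
    then obtain l where l: "n0 = Suc l" by (cases n0) auto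
    have "\<not> tk l > s" using not_less_Least[of l "\<lambda>n. tk n > s"] l unfolding n0_def by simp
    hence "tk l \<le> s" by simp
    thus ?thesis using n0 l by (intro exI[of _ l]) simp
  qed
  have succ_eq: "succ_upd h dur tk s = {k. k \<le> l \<and> tk k \<notin> DS}"
    if "tk l \<le> s" "s < tk (Suc l)" for l s
  proof -
    have "tk k \<le> s \<longleftrightarrow> k \<le> l" for k
    proof
      assume "tk k \<le> s" hence "tk k < tk (Suc l)" using that by simp
      thus "k \<le> l" using tk_less by simp
    next
      assume "k \<le> l" thus "tk k \<le> s" using tk_le[of k l] that by simp
    qed
    thus ?thesis using tk_nn by (auto simp: succ_upd_def Theta_def DS_def)
  qed
  have held_succ: "hs s = x (tk l)" if "tk l \<notin> DS" "tk l \<le> s" "s < tk (Suc l)" for l s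
  proof -
    have e: "succ_upd h dur tk s = {k. k \<le> l \<and> tk k \<notin> DS}" using succ_eq that(2,3) .
    have "Max {k. k \<le> l \<and> tk k \<notin> DS} = l"
      by (rule Max_eqI) (use that(1) in auto)
    moreover have ne: "{k. k \<le> l \<and> tk k \<notin> DS} \<noteq> {}" using that(1) by blast
    ultimately show ?thesis unfolding hs_def held_sample_def e if_not_P[OF ne] by simp
  qed
  have held_fail: "hs s = (if i = 0 then 0 else x (tk (i - 1)))"
    if "i \<le> l" "\<forall>q\<in>{i..l}. tk q \<in> DS" "0 < i \<Longrightarrow> tk (i - 1) \<notin> DS" "tk l \<le> s" "s < tk (Suc l)"
    for i l s
  proof -
    have e: "succ_upd h dur tk s = {k. k \<le> l \<and> tk k \<notin> DS}" using succ_eq that(4,5) .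
    show ?thesis
    proof (cases "i = 0")
      case True
      hence "{k. k \<le> l \<and> tk k \<notin> DS} = {}" using that(2) by auto
      thus ?thesis using e True by (simp add: hs_def held_sample_def)
    next
      case False
      have mem: "i - 1 \<in> {k. k \<le> l \<and> tk k \<notin> DS}" using False that(1,3) by auto
      have "Max {k. k \<le> l \<and> tk k \<notin> DS} = i - 1"
      proof (rule Max_eqI)
        show "finite {k. k \<le> l \<and> tk k \<notin> DS}" by simp
        show "i - 1 \<in> {k. k \<le> l \<and> tk k \<notin> DS}" by (rule mem)
        fix y assume "y \<in> {k. k \<le> l \<and> tk k \<notin> DS}"
        hence "y \<le> l" "tk y \<notin> DS" by auto
        hence "\<not> (i \<le> y)" using that(2) by auto
        thus "y \<le> i - 1" by simp
      qed
      moreover have ne: "{k. k \<le> l \<and> tk k \<notin> DS} \<noteq> {}" using mem by blast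
      ultimately show ?thesis unfolding hs_def held_sample_def e if_not_P[OF ne] using False by simp
    qed
  qed
  have g2cont: "continuous_on {0..} \<gamma>2" using K3 by (simp add: class_K_inf_def)
  have trig_ok: "\<gamma>2 (4 * norm (x (tk j) - x s)) \<le> lam * (1 - c) * W s"
    if j: "tk j \<notin> DS" and s: "tk j \<le> s" "s < tk (Suc j)" for j s
  proof (cases "s = tk j")
    case True
    have "\<gamma>2 0 = 0" using K3 by (simp add: class_K_inf_def)
    moreover have "lam * (1 - c) * W s \<ge> 0" using lam c Wnn[of s] by simp
    ultimately show ?thesis using True by simp
  next
    case False
    hence sg: "s > tk j" using s by simp
    define S where "S = {s. s > tk j \<and> \<not> (\<gamma>2 (4 * norm (x (tk j) - x s)) \<le> lam * (1 - c) * V (x s))}"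
    have "s \<notin> S"
    proof
      assume sS: "s \<in> S"
      hence ne: "S \<noteq> {}" by auto
      have "tk (Suc j) = Inf S" using trig[of j] j ne unfolding S_def DS_def by simp
      moreover have "Inf S \<le> s" using sS by (intro cInf_lower) (auto simp: S_def intro: bdd_belowI[of _ "tk j"])
      ultimately show False using s by simp
    qed
    thus ?thesis using sg by (simp add: S_def W_def)
  qed
  have trig_end: "\<gamma>2 (4 * norm (x (tk j) - x (tk (Suc j)))) \<le> lam * (1 - c) * W (tk (Suc j))"
    if j: "tk j \<notin> DS" for j
  proof -
    have lt: "tk j < tk (Suc j)" using tk_less by simp
    let ?F = "\<lambda>s. lam * (1 - c) * W s - \<gamma>2 (4 * norm (x (tk j) - x s))"
    have xc: "continuous_on {tk j..tk (Suc j)} x"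
      by (rule continuous_on_subset[OF x_cont]) (use tk_nn in auto)
    have nc: "continuous_on {tk j..tk (Suc j)} (\<lambda>s. 4 * norm (x (tk j) - x s))"
      by (intro continuous_intros xc)
    have gc: "continuous_on {tk j..tk (Suc j)} (\<lambda>s. \<gamma>2 (4 * norm (x (tk j) - x s)))"
      by (rule continuous_on_compose2[OF g2cont nc]) auto
    have Fc: "continuous_on (closure {tk j<..<tk (Suc j)}) ?F"
      using lt by (simp, intro continuous_intros Wcont' gc) (simp add: tk_nn)
    have "?F (tk (Suc j)) \<ge> 0"
    proof (rule continuous_ge_on_closure[OF Fc])
      show "tk (Suc j) \<in> closure {tk j<..<tk (Suc j)}" using lt by simp
      fix s assume "s \<in> {tk j<..<tk (Suc j)}"
      thus "?F s \<ge> 0" using trig_ok[OF j, of s] by simp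
    qed
    thus ?thesis by simp
  qed
  have dctrl: "DV (x s) (f (x s) (kfb (hs s))) \<le> - (c * lam) * W s"
    if "\<gamma>2 (4 * norm (hs s - x s)) \<le> lam * (1 - c) * W s" for s
  proof -
    have "DV (x s) (f (x s) (kfb (hs s))) \<le> - lam * V (x s) + \<gamma>2 (norm (hs s - x s))"
      using ISS[of "x s" "hs s - x s"] by simp
    moreover have "\<gamma>2 (norm (hs s - x s)) \<le> \<gamma>2 (4 * norm (hs s - x s))"
      by (rule K_mono[OF K3]) auto
    ultimately show ?thesis using that by (simp add: W_def algebra_simps)
  qed
  have dunc: "DV (x s) (f (x s) (kfb (hs s))) \<le> (\<mu> - lam) * W s + (lam * (1 - c) + \<mu>) * W s0"
    if hz: "hs s = 0 \<or> \<gamma>2 (4 * norm (hs s - x s0)) \<le> lam * (1 - c) * W s0" for s s0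
  proof -
    have base: "DV (x s) (f (x s) (kfb (hs s))) \<le> - lam * W s + \<gamma>2 (norm (hs s - x s))"
      using ISS[of "x s" "hs s - x s"] by (simp add: W_def)
    have coef: "lam * (1 - c) + \<mu> \<ge> 0" using lam c A2(1) by simp
    have a1W: "\<alpha>1 (norm (x u)) \<le> W u" for u using Vbounds[of "x u"] by (simp add: W_def)
    have key: "\<gamma>2 (norm (hs s - x s)) \<le> \<mu> * W s + (lam * (1 - c) + \<mu>) * W s0"
    proof (cases "hs s = 0")
      case True
      have "\<gamma>2 (norm (hs s - x s)) = \<gamma>2 (norm (x s))" using True by simp
      also have "\<dots> \<le> \<gamma>2 (4 * norm (x s))" by (rule K_mono[OF K3]) auto
      also have "\<dots> \<le> \<mu> * \<alpha>1 (norm (x s))" by (rule A2(2)) simp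
      also have "\<dots> \<le> \<mu> * W s" using a1W[of s] A2(1) by simp
      finally show ?thesis using coef Wnn[of s0] by (smt (verit) mult_nonneg_nonneg)
    next
      case False
      hence hz': "\<gamma>2 (4 * norm (hs s - x s0)) \<le> lam * (1 - c) * W s0" using hz by simp
      define a where "a = norm (hs s - x s0)"
      define b where "b = norm (x s0 - x s)"
      have tri: "norm (hs s - x s) \<le> a + b" unfolding a_def b_def by (rule norm_diff_triangle_le) auto
      have "\<gamma>2 (norm (hs s - x s)) \<le> \<gamma>2 (a + b)" by (rule K_mono[OF K3 _ tri]) simp
      also have "\<dots> \<le> \<gamma>2 (2 * a) + \<gamma>2 (2 * b)" by (rule K_sum[OF K3]) (auto simp: a_def b_def)
      also have "\<gamma>2 (2 * a) \<le> \<gamma>2 (4 * a)" by (rule K_mono[OF K3]) (auto simp: a_def)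
      also have "\<gamma>2 (2 * b) \<le> \<mu> * (W s0 + W s)"
      proof -
        define M where "M = max (norm (x s0)) (norm (x s))"
        have "b \<le> norm (x s0) + norm (x s)" unfolding b_def by (rule norm_triangle_ineq4)
        hence "2 * b \<le> 4 * M" unfolding M_def by linarith
        hence "\<gamma>2 (2 * b) \<le> \<gamma>2 (4 * M)" by (intro K_mono[OF K3]) (auto simp: b_def)
        also have "\<dots> \<le> \<mu> * \<alpha>1 M" by (rule A2(2)) (auto simp: M_def le_max_iff_disj)
        also have "\<alpha>1 M \<le> W s0 + W s"
          using a1W[of s0] a1W[of s] Wnn[of s0] Wnn[of s] unfolding M_def by (auto simp: max_def)
        hence "\<mu> * \<alpha>1 M \<le> \<mu> * (W s0 + W s)" using A2(1) by simp
        finally show ?thesis .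
      qed
      finally have "\<gamma>2 (norm (hs s - x s)) \<le> \<gamma>2 (4 * a) + \<mu> * (W s0 + W s)" by simp
      thus ?thesis using hz' unfolding a_def by (simp add: algebra_simps)
    qed
    show ?thesis using base key by (simp add: algebra_simps)
  qed
  have Bs_sets: "Bs \<in> sets lebesgue" unfolding Bs_def by (intro sets.countable_UN) (auto simp: ico_sets)
  have m_mono': "m s \<le> m t" if "s \<le> t" for s t unfolding m_def by (rule m_mono[OF Bs_sets that])
  have m_nn: "m t \<ge> 0" for t by (simp add: m_def)
  have Dnn: "\<And>n. Delta_S h dur tk n \<ge> 0" by (rule Delta_nonneg[OF t_mono t_unb])
  have G_mono: "exp (- (c * lam) * (t - s)) * G s \<le> G t" if "s \<le> t" for s t
  proof -
    have "exp (- (c * lam) * (t - s)) * G s = exp (- (c * lam) * (t - s) + (- (c * lam) * s + R * m s)) * W 0"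
      unfolding G_def by (simp only: exp_add[of "- (c * lam) * (t - s)"] mult.assoc)
    also have "\<dots> = exp (- (c * lam) * t + R * m s) * W 0"
      by (rule arg_cong[where f="\<lambda>z. exp z * W 0"]) (simp add: algebra_simps)
    also have "\<dots> \<le> exp (- (c * lam) * t + R * m t) * W 0"
      using m_mono'[OF that] Rpos Wnn[of 0] by (intro mult_right_mono) auto
    finally show ?thesis by (simp add: G_def)
  qed
  have G_grow: "exp (r * (t - s)) * G s \<le> G t" if "0 \<le> s" "s \<le> t" "{s..<t} \<subseteq> Bs" for s t
  proof -
    have ma: "m s + (t - s) \<le> m t" unfolding m_def by (rule m_add[OF Bs_sets that])
    have "exp (r * (t - s)) * G s = exp (r * (t - s) + (- (c * lam) * s + R * m s)) * W 0"
      unfolding G_def by (simp only: exp_add[of "r * (t - s)"] mult.assoc)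
    also have "\<dots> = exp (- (c * lam) * t + R * (m s + (t - s))) * W 0"
      by (rule arg_cong[where f="\<lambda>z. exp z * W 0"]) (simp add: r_def algebra_simps)
    also have "\<dots> \<le> exp (- (c * lam) * t + R * m t) * W 0"
      using ma Rpos Wnn[of 0] by (intro mult_right_mono) auto
    finally show ?thesis by (simp add: G_def)
  qed
  have main: "\<forall>t\<in>{0..tk j}. W t \<le> G t" for j
  proof (induction j)
    case 0
    have "W 0 \<le> G 0"
    proof -
      have "1 \<le> exp (R * m 0)" using Rpos m_nn[of 0] by simp
      hence "1 * W 0 \<le> exp (R * m 0) * W 0" using Wnn[of 0] by (intro mult_right_mono) auto
      thus ?thesis by (simp add: G_def)
    qed
    thus ?case using t0 by simp
  next
    case (Suc j)
    show ?case
    proof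
      fix t assume t: "t \<in> {0..tk (Suc j)}"
      show "W t \<le> G t"
      proof (cases "t \<le> tk j")
        case True thus ?thesis using Suc.IH t by auto
      next
        case False
        hence tj: "tk j < t" "t \<le> tk (Suc j)" using t by auto
        have tjb: "tk j \<le> tk (Suc j)" using tk_le by simp
        show ?thesis
        proof (cases "tk j \<in> DS")
          case False
          define \<psi> where "\<psi> s = exp ((c * lam) * (s - tk j)) * W s" for s
          define d where "d s = exp ((c * lam) * (s - tk j)) * DV (x s) (f (x s) (kfb (hs s)))
                               + exp ((c * lam) * (s - tk j)) * (c * lam) * W s" for s
          have mono: "\<forall>u\<in>{tk j..tk (Suc j)}. \<psi> u \<le> W (tk j)"
          proof (rule mono_lemma[OF tjb])
            show "continuous_on {tk j..tk (Suc j)} \<psi>" unfolding \<psi>_def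
              by (intro continuous_intros Wcont' tk_nn)
            fix s assume s: "s \<in> {tk j..<tk (Suc j)}"
            have s0: "s \<ge> 0" using s tk_nn[of j] by auto
            have ed: "((\<lambda>s. exp ((c * lam) * (s - tk j))) has_real_derivative
                        exp ((c * lam) * (s - tk j)) * (c * lam)) (at s within {s..})"
              by (auto intro!: derivative_eq_intros)
            show "(\<psi> has_real_derivative d s) (at s within {s..})"
              unfolding \<psi>_def using DERIV_mult'[OF ed Wder[OF s0]] by (simp add: d_def)
            have hsx: "hs s = x (tk j)" using held_succ[OF False] s by auto
            have "\<gamma>2 (4 * norm (hs s - x s)) \<le> lam * (1 - c) * W s"
              using trig_ok[OF False, of s] s hsx by auto
            hence dv: "DV (x s) (f (x s) (kfb (hs s))) + (c * lam) * W s \<le> 0"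
              using dctrl[of s] by simp
            have "d s = exp ((c * lam) * (s - tk j)) * (DV (x s) (f (x s) (kfb (hs s))) + (c * lam) * W s)"
              by (simp add: d_def algebra_simps)
            also have "\<dots> \<le> 0" using dv by (simp add: mult_nonneg_nonpos)
            finally show "d s \<le> 0" .
          next
            show "\<psi> (tk j) \<le> W (tk j)" by (simp add: \<psi>_def)
          qed
          hence pt: "\<psi> t \<le> W (tk j)" using tj by auto
          have pe: "exp (- (c * lam) * (t - tk j)) * \<psi> t = W t"
            by (simp add: \<psi>_def mult.assoc[symmetric] exp_add[symmetric])
          have "exp (- (c * lam) * (t - tk j)) * \<psi> t \<le> exp (- (c * lam) * (t - tk j)) * W (tk j)"
            by (rule mult_left_mono[OF pt]) simp
          hence "W t \<le> exp (- (c * lam) * (t - tk j)) * W (tk j)" by (simp only: pe)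
          also have "\<dots> \<le> exp (- (c * lam) * (t - tk j)) * G (tk j)"
            using Suc.IH tk_nn[of j] by (intro mult_left_mono) auto
          also have "\<dots> \<le> G t" using G_mono tj by simp
          finally show ?thesis .
        next
          case True
          define P where "P i = (\<forall>q\<in>{i..j}. tk q \<in> DS)" for i
          define i where "i = (LEAST i. P i)"
          have Pj: "P j" using True by (simp add: P_def)
          have iP: "P i" unfolding i_def by (rule LeastI[of P j, OF Pj])
          have ij: "i \<le> j" unfolding i_def by (rule Least_le[of P j, OF Pj])
          have iprev: "tk (i - 1) \<notin> DS" if "0 < i"
          proof
            assume a: "tk (i - 1) \<in> DS"
            have "P (i - 1)" unfolding P_def
            proof
              fix q assume "q \<in> {i - 1..j}"
              hence "q = i - 1 \<or> q \<in> {i..j}" by auto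
              thus "tk q \<in> DS" using a iP by (auto simp: P_def)
            qed
            moreover have "i - 1 < i" using that by simp
            ultimately show False using not_less_Least[of "i - 1" P] unfolding i_def by simp
          qed
          define z where "z = (if i = 0 then (0 :: real ^ 'n) else x (tk (i - 1)))"
          define s0 where "s0 = tk i"
          have s0nn: "s0 \<ge> 0" by (simp add: s0_def tk_nn)
          have s0j: "s0 \<le> tk j" using ij tk_le by (simp add: s0_def)
          have inrun: "\<exists>l. i \<le> l \<and> l \<le> j \<and> tk l \<le> s \<and> s < tk (Suc l)"
            if s: "s \<in> {s0..<tk (Suc j)}" for s
          proof -
            obtain l where l: "tk l \<le> s" "s < tk (Suc l)" using locate[of s] s s0nn by auto
            have "tk i < tk (Suc l)" using l s by (simp add: s0_def)
            hence "i \<le> l" using tk_less by simp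
            moreover have "tk l < tk (Suc j)" using l s by simp
            hence "l \<le> j" using tk_less by simp
            ultimately show ?thesis using l by blast
          qed
          have hz: "hs s = z" if s: "s \<in> {s0..<tk (Suc j)}" for s
          proof -
            obtain l where l: "i \<le> l" "l \<le> j" "tk l \<le> s" "s < tk (Suc l)" using inrun[OF s] by blast
            have "\<forall>q\<in>{i..l}. tk q \<in> DS" using iP l(2) by (auto simp: P_def)
            thus ?thesis using held_fail[OF l(1) _ iprev l(3,4)] by (simp add: z_def)
          qed
          have base: "z = 0 \<or> \<gamma>2 (4 * norm (z - x s0)) \<le> lam * (1 - c) * W s0"
          proof (cases "i = 0")
            case True thus ?thesis by (simp add: z_def)
          next
            case False
            hence ip: "0 < i" by simp
            have "\<gamma>2 (4 * norm (x (tk (i - 1)) - x (tk (Suc (i - 1))))) \<le> lam * (1 - c) * W (tk (Suc (i - 1)))"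
              by (rule trig_end[OF iprev[OF ip]])
            moreover have "Suc (i - 1) = i" using ip by simp
            ultimately show ?thesis using False by (simp add: z_def s0_def)
          qed
          define \<psi> where "\<psi> s = exp (- r * (s - s0)) * W s" for s
          define d where "d s = exp (- r * (s - s0)) * DV (x s) (f (x s) (kfb (hs s)))
                               + exp (- r * (s - s0)) * (- r) * W s" for s
          have s0b: "s0 \<le> tk (Suc j)" using s0j tjb by simp
          have mono: "\<forall>u\<in>{s0..tk (Suc j)}. \<psi> u \<le> W s0"
          proof (rule mono_lemma[OF s0b])
            show "continuous_on {s0..tk (Suc j)} \<psi>" unfolding \<psi>_def
              by (intro continuous_intros Wcont' s0nn)
            fix s assume s: "s \<in> {s0..<tk (Suc j)}"
            have snn: "s \<ge> 0" using s s0nn by auto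
            have ed: "((\<lambda>s. exp (- r * (s - s0))) has_real_derivative
                        exp (- r * (s - s0)) * (- r)) (at s within {s..})"
              by (auto intro!: derivative_eq_intros)
            show "(\<psi> has_real_derivative d s) (at s within {s..})"
              unfolding \<psi>_def using DERIV_mult'[OF ed Wder[OF snn]] by (simp add: d_def)
            assume ge: "W s0 \<le> \<psi> s"
            have e1: "exp (r * (s - s0)) * exp (- r * (s - s0)) = 1" by (simp add: exp_add[symmetric])
            have "exp (r * (s - s0)) * W s0 \<le> exp (r * (s - s0)) * \<psi> s"
              using ge by (simp add: mult_left_mono)
            also have "\<dots> = W s" using e1 by (simp add: \<psi>_def mult.assoc[symmetric])
            finally have W1: "exp (r * (s - s0)) * W s0 \<le> W s" .
            have "1 \<le> exp (r * (s - s0))" using rpos s by simp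
            hence "1 * W s0 \<le> exp (r * (s - s0)) * W s0" using Wnn[of s0] by (intro mult_right_mono) auto
            hence Wge: "W s0 \<le> W s" using W1 by simp
            have hzs: "hs s = 0 \<or> \<gamma>2 (4 * norm (hs s - x s0)) \<le> lam * (1 - c) * W s0"
              using hz[OF s] base by simp
            have dv: "DV (x s) (f (x s) (kfb (hs s))) \<le> (\<mu> - lam) * W s + (lam * (1 - c) + \<mu>) * W s0"
              by (rule dunc[OF hzs])
            have coef: "lam * (1 - c) + \<mu> \<ge> 0" using lam c A2(1) by simp
            have "(lam * (1 - c) + \<mu>) * W s0 \<le> (lam * (1 - c) + \<mu>) * W s"
              using Wge coef by (simp add: mult_left_mono)
            hence "DV (x s) (f (x s) (kfb (hs s))) \<le> (2 * \<mu> - c * lam) * W s"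
              using dv by (simp add: algebra_simps)
            also have "\<dots> \<le> r * W s" using Wnn[of s] lam
              by (simp add: r_def R_def mult_right_mono algebra_simps)
            finally have dv2: "DV (x s) (f (x s) (kfb (hs s))) - r * W s \<le> 0" by simp
            have "d s = exp (- r * (s - s0)) * (DV (x s) (f (x s) (kfb (hs s))) - r * W s)"
              by (simp add: d_def algebra_simps)
            also have "\<dots> \<le> 0" using dv2 by (simp add: mult_nonneg_nonpos)
            finally show "d s \<le> 0" .
          next
            show "\<psi> s0 \<le> W s0" by (simp add: \<psi>_def)
          qed
          have ts0: "s0 \<le> t" using s0j tj by simp
          hence pt: "\<psi> t \<le> W s0" using mono tj by auto
          have pe: "exp (r * (t - s0)) * \<psi> t = W t"
            by (simp add: \<psi>_def mult.assoc[symmetric] exp_add[symmetric])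
          have "exp (r * (t - s0)) * \<psi> t \<le> exp (r * (t - s0)) * W s0"
            by (rule mult_left_mono[OF pt]) simp
          hence "W t \<le> exp (r * (t - s0)) * W s0" by (simp only: pe)
          also have "\<dots> \<le> exp (r * (t - s0)) * G s0"
            using Suc.IH s0nn s0j by (intro mult_left_mono) auto
          also have "\<dots> \<le> G t"
          proof (rule G_grow[OF s0nn ts0])
            show "{s0..<t} \<subseteq> Bs"
            proof
              fix u assume u: "u \<in> {s0..<t}"
              hence u': "u \<in> {s0..<tk (Suc j)}" using tj by auto
              obtain l where l: "i \<le> l" "l \<le> j" "tk l \<le> u" "u < tk (Suc l)" using inrun[OF u'] by blast
              have "tk l \<in> DS" using iP l by (auto simp: P_def)
              then obtain n where n: "tk l \<in> dos_int h dur n" by (auto simp: DS_def dos_set_def)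
              have "tk (Suc l) - tk l \<le> Delta_S h dur tk n" by (rule Delta_bound[OF t_mono t_unb n])
              moreover have "h n \<le> tk l" "tk l < h n + dur n" using n by (auto simp: dos_int_def)
              ultimately have "h n \<le> u" "u < h n + dur n + Delta_S h dur tk n" using l by linarith+
              thus "u \<in> Bs" unfolding Bs_def by (intro UN_I[of n]) auto
            qed
          qed
          finally show ?thesis .
        qed
      qed
    qed
  qed
  have Dst_nn: "Dst \<ge> 0"
    using cSup_upper[OF _ Dbdd, of "Delta_S h dur tk 0"] Dnn[of 0] by (simp add: Dst_def)
  have bddd: "bdd_below (range dur)"
  proof (rule bdd_belowI[of _ 0])
    fix y assume "y \<in> range dur"
    then obtain n where "y = dur n" by auto
    thus "0 \<le> y" using dur_pos[of n] by simp
  qed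
  have tst_le: "tst \<le> dur n" for n unfolding tst_def
    by (rule cInf_lower[OF _ bddd]) simp
  have tst_pos: "tst > 0" using tau_star_pos by (simp add: tst_def)
  have D_nn: "D \<ge> 0" using Dst_nn tst_pos by (simp add: D_def)
  have DeltaD: "Delta_S h dur tk n \<le> D * dur n" for n
  proof -
    have "Delta_S h dur tk n \<le> Dst" unfolding Dst_def by (rule cSup_upper[OF _ Dbdd]) simp
    also have "Dst = D * tst" using tst_pos by (simp add: D_def)
    also have "\<dots> \<le> D * dur n" using D_nn tst_le by (simp add: mult_left_mono)
    finally show ?thesis .
  qed
  have m_bound: "m t \<le> (1 + D) * (\<kappa> + t / \<tau>)" if t: "t \<ge> 0" for t
  proof -
    have "m t \<le> (1 + D) * measure lebesgue (Xi h dur t)"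
      unfolding m_def Bs_def
      by (rule meas_bound[OF h0 dur_pos h_order A1a D_nn Dnn DeltaD t])
    also have "\<dots> \<le> (1 + D) * (\<kappa> + t / \<tau>)"
      using A1c[OF t] D_nn by (intro mult_left_mono) auto
    finally show ?thesis .
  qed
  have final: "W t \<le> exp (\<kappa> * R * (1 + D)) * exp (- (c * lam - R / \<tau> * (1 + D)) * t) * \<alpha>2 (norm (x 0))"
    if t: "t \<ge> 0" for t
  proof -
    obtain j where j: "tk j \<ge> t"
      using t_unb unfolding filterlim_at_top eventually_sequentially by blast
    have "W t \<le> G t" using main[of j] t j by auto
    also have "G t \<le> exp (- (c * lam) * t + R * ((1 + D) * (\<kappa> + t / \<tau>))) * W 0"
    proof -
      have "R * m t \<le> R * ((1 + D) * (\<kappa> + t / \<tau>))"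
        using m_bound[OF t] Rpos by (intro mult_left_mono) auto
      hence "exp (- (c * lam) * t + R * m t) \<le> exp (- (c * lam) * t + R * ((1 + D) * (\<kappa> + t / \<tau>)))"
        by simp
      thus ?thesis unfolding G_def using Wnn[of 0] by (rule mult_right_mono)
    qed
    also have "\<dots> \<le> exp (- (c * lam) * t + R * ((1 + D) * (\<kappa> + t / \<tau>))) * \<alpha>2 (norm (x 0))"
      using Vbounds[of "x 0"] by (intro mult_left_mono) (auto simp: W_def)
    also have "exp (- (c * lam) * t + R * ((1 + D) * (\<kappa> + t / \<tau>)))
             = exp (\<kappa> * R * (1 + D) + (- (c * lam - R / \<tau> * (1 + D)) * t))"
      by (rule arg_cong[where f=exp]) (simp add: algebra_simps)
    also have "exp (\<kappa> * R * (1 + D) + (- (c * lam - R / \<tau> * (1 + D)) * t))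
             = exp (\<kappa> * R * (1 + D)) * exp (- (c * lam - R / \<tau> * (1 + D)) * t)"
      by (rule exp_add)
    finally show ?thesis .
  qed
  have "\<forall>t \<ge> 0. norm (x t) \<le> the_inv_into {0..} \<alpha>1
          (exp (\<kappa> * R * (1 + D)) * exp (- (c * lam - R / \<tau> * (1 + D)) * t) * \<alpha>2 (norm (x 0)))"
  proof (intro allI impI)
    fix t :: real assume t: "t \<ge> 0"
    show "norm (x t) \<le> the_inv_into {0..} \<alpha>1
          (exp (\<kappa> * R * (1 + D)) * exp (- (c * lam - R / \<tau> * (1 + D)) * t) * \<alpha>2 (norm (x 0)))"
    proof (rule K_inv[OF K1])
      show "0 \<le> exp (\<kappa> * R * (1 + D)) * exp (- (c * lam - R / \<tau> * (1 + D)) * t) * \<alpha>2 (norm (x 0))"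
        using K_nonneg[OF K2, of "norm (x 0)"] by simp
      show "0 \<le> norm (x t)" by simp
      show "\<alpha>1 (norm (x t)) \<le> exp (\<kappa> * R * (1 + D)) * exp (- (c * lam - R / \<tau> * (1 + D)) * t) * \<alpha>2 (norm (x 0))"
        using Vbounds[of "x t"] final[OF t] by (simp add: W_def)
    qed
  qed
  thus ?thesis unfolding R_def D_def Dst_def tst_def .
qed

end
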